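(* Let $p,q$ be distributions on $\mathbb{R}$ with $\widetilde W_1(p,q)\le\epsilon$, and let $g(x)=x$ or $g(x)=|x|$. Then there exist $r_p\in\mathbb{F}(p,7\epsilon,g)$ and $r_q\in\mathbb{F}(q,7\epsilon,g)$ such that $r_p$ is less than $r_q$ in the convex order with respect to $g(X)$; that is, for every convex function $f$ for which the expectations exist, $\mathbb{E}_{r_p}[f(g(X))]\le\mathbb{E}_{r_q}[f(g(X))]$.
   Context: On $\mathbb{R}$, $\widetilde W_1(p,q)=\sup_{u\in\mathcal{U}'}|\mathbb{E}_p[u(X)]-\mathbb{E}_q[u(X)]|$ with $\mathcal{U}'=\{x\mapsto\max(0,vx-a):|v|\le1,a\in\mathbb{R}\}\cup\{x\mapsto vx:|v|\le1\}$. Friendly perturbation: $r\in\mathbb{F}(p,\eta,g)$ means there is a coupling $\pi_{X,Y}$ of $X\sim p$, $Y\sim r$ with $\mathbb{E}_\pi|X-Y|\le\eta$ such that $g(Y)$ lies between $g(X)$ and $\mathbb{E}_r[g(Y)]$ almost surely. *)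

theory Defs
  imports "HOL-Probability.Probability"
begin

definition real_distr :: "real measure \<Rightarrow> bool" where
  "real_distr p \<longleftrightarrow> prob_space p \<and> sets p = sets borel"

definition Uprime :: "(real \<Rightarrow> real) set" where
  "Uprime = {(\<lambda>x. max 0 (v * x - a)) | v a. \<bar>v\<bar> \<le> 1}
          \<union> {(\<lambda>x. v * x) | v. \<bar>v\<bar> \<le> 1}"

definition W1tilde :: "real measure \<Rightarrow> real measure \<Rightarrow> ereal" where
  "W1tilde p q = (SUP u\<in>Uprime. ereal \<bar>(\<integral>x. u x \<partial>p) - (\<integral>x. u x \<partial>q)\<bar>)"

definition coupling :: "(real \<times> real) measure \<Rightarrow> real measure \<Rightarrow> real measure \<Rightarrow> bool" where
  "coupling \<pi> p r \<longleftrightarrow> prob_space \<pi> \<and> sets \<pi> = sets (borel \<Otimes>\<^sub>M borel)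
     \<and> distr \<pi> borel fst = p \<and> distr \<pi> borel snd = r"

definition friendly :: "real measure \<Rightarrow> real \<Rightarrow> (real \<Rightarrow> real) \<Rightarrow> real measure set" where
  "friendly p \<eta> g = {r. real_distr r \<and> integrable r g \<and>
     (\<exists>\<pi>. coupling \<pi> p r
        \<and> (\<integral>\<^sup>+ z. ennreal \<bar>fst z - snd z\<bar> \<partial>\<pi>) \<le> ennreal \<eta>
        \<and> (AE z in \<pi>. min (g (fst z)) (\<integral>y. g y \<partial>r) \<le> g (snd z)
                    \<and> g (snd z) \<le> max (g (fst z)) (\<integral>y. g y \<partial>r)))}"

definition convex_order_wrt :: "(real \<Rightarrow> real) \<Rightarrow> real measure \<Rightarrow> real measure \<Rightarrow> bool" where
  "convex_order_wrt g r s \<longleftrightarrow>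
     (\<forall>f::real \<Rightarrow> real. convex_on UNIV f \<longrightarrow> integrable r (\<lambda>x. f (g x))
        \<longrightarrow> integrable s (\<lambda>x. f (g x))
        \<longrightarrow> (\<integral>x. f (g x) \<partial>r) \<le> (\<integral>x. f (g x) \<partial>s))"

end

theory Submission
  imports Defs
begin


lemma friendly_map:
  fixes p :: "real measure" and \<phi> g :: "real \<Rightarrow> real"
  assumes rp: "real_distr p" and gm: "g \<in> borel_measurable borel" and phim: "\<phi> \<in> borel_measurable borel"
    and gi: "integrable p (\<lambda>x. g (\<phi> x))"
    and cost: "(\<integral>\<^sup>+x. ennreal \<bar>x - \<phi> x\<bar> \<partial>p) \<le> ennreal \<eta>"
    and btw: "\<And>x. min (g x) (\<integral>x. g (\<phi> x) \<partial>p) \<le> g (\<phi> x) \<and> g (\<phi> x) \<le> max (g x) (\<integral>x. g (\<phi> x) \<partial>p)"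
  shows "distr p borel \<phi> \<in> friendly p \<eta> g"
proof -
  have P: "prob_space p" and S: "sets p = sets borel" using rp unfolding real_distr_def by auto
  interpret P: prob_space p by (rule P)
  have phip: "\<phi> \<in> borel_measurable p" using phim by (simp only: measurable_cong_sets[OF S refl])
  have pairm: "(\<lambda>x. (x, \<phi> x)) \<in> measurable p (borel \<Otimes>\<^sub>M borel)"
    using phip by (intro measurable_Pair) (simp_all only: measurable_cong_sets[OF S refl] measurable_ident_sets[OF refl])
  define r where "r = distr p borel \<phi>"
  define \<pi> where "\<pi> = distr p (borel \<Otimes>\<^sub>M borel) (\<lambda>x. (x, \<phi> x))"
  have ig: "(\<integral>y. g y \<partial>r) = (\<integral>x. g (\<phi> x) \<partial>p)"
    unfolding r_def by (rule integral_distr[OF phip gm])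
  have "real_distr r" unfolding r_def real_distr_def
    using P.prob_space_distr[OF phip] by simp
  moreover have "integrable r g" unfolding r_def
    using integrable_distr_eq[OF phip gm] gi by simp
  moreover have "coupling \<pi> p r"
    unfolding coupling_def
  proof (intro conjI)
    show "prob_space \<pi>" unfolding \<pi>_def by (rule P.prob_space_distr[OF pairm])
    show "sets \<pi> = sets (borel \<Otimes>\<^sub>M borel)" unfolding \<pi>_def by simp
    have "distr \<pi> borel fst = distr p borel (\<lambda>x. fst (x, \<phi> x))"
      unfolding \<pi>_def by (rule distr_distr[OF measurable_fst pairm, unfolded comp_def])
    also have "\<dots> = p" using distr_id2[of borel p] S by simp
    finally show "distr \<pi> borel fst = p" .
    show "distr \<pi> borel snd = r"
      unfolding \<pi>_def r_def using distr_distr[OF measurable_snd pairm] by (simp add: comp_def)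
  qed
  moreover have "(\<integral>\<^sup>+ z. ennreal \<bar>fst z - snd z\<bar> \<partial>\<pi>) \<le> ennreal \<eta>"
    unfolding \<pi>_def using cost by (subst nn_integral_distr[OF pairm]) auto
  moreover have "AE z in \<pi>. min (g (fst z)) (\<integral>y. g y \<partial>r) \<le> g (snd z)
                    \<and> g (snd z) \<le> max (g (fst z)) (\<integral>y. g y \<partial>r)"
    unfolding \<pi>_def ig using btw gm
    by (subst AE_distr_iff[OF pairm]) auto
  ultimately show ?thesis unfolding friendly_def r_def[symmetric] by blast
qed




lemma three_slope:
  fixes f :: "real \<Rightarrow> real"
  assumes "convex_on UNIV f" "a < b" "b < c"
  shows "(f b - f a) / (b - a) \<le> (f c - f b) / (c - b)"
proof -
  have "(f a - f b) / (a - b) \<le> (f a - f c) / (a - c)"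
       "(f a - f c) / (a - c) \<le> (f b - f c) / (b - c)"
    using convex_on_slope_le[OF assms(1), of a c b] assms by auto
  moreover have "(f a - f b) / (a - b) = (f b - f a) / (b - a)"
    by (metis minus_diff_eq minus_divide_divide)
  moreover have "(f b - f c) / (b - c) = (f c - f b) / (c - b)"
    by (metis minus_diff_eq minus_divide_divide)
  ultimately show ?thesis by linarith
qed

lemma convex_subgrad:
  fixes f :: "real \<Rightarrow> real"
  assumes cf: "convex_on UNIV f"
  obtains d where "\<And>x y. f x + d x * (y - x) \<le> f y" "mono d"
proof -
  define d where "d x = Inf ((\<lambda>y. (f y - f x) / (y - x)) ` {x<..})" for x
  have nonempty: "((\<lambda>y. (f y - f x) / (y - x)) ` {x<..}) \<noteq> {}" for x
    by auto
  have lb: "(f x - f w) / (x - w) \<le> (f y - f x) / (y - x)" if "w < x" "x < y" for w x y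
    using three_slope[OF cf that] .
  have bdd: "bdd_below ((\<lambda>y. (f y - f x) / (y - x)) ` {x<..})" for x
    unfolding bdd_below_def using lb[of "x - 1" x] by force
  have dle: "d x \<le> (f y - f x) / (y - x)" if "x < y" for x y
    unfolding d_def by (rule cInf_lower) (use that bdd in auto)
  have dge: "(f x - f w) / (x - w) \<le> d x" if "w < x" for w x
    unfolding d_def by (rule cInf_greatest[OF nonempty]) (use lb that in auto)
  have sub: "f x + d x * (y - x) \<le> f y" for x y
  proof (cases "x < y")
    case True
    then show ?thesis using dle[OF True] by (simp add: field_simps)
  next
    case False
    show ?thesis
    proof (cases "x = y")
      case True then show ?thesis by simp
    next
      case False
      with \<open>\<not> x < y\<close> have "y < x" by simp
      then show ?thesis using dge[OF \<open>y < x\<close>] by (simp add: field_simps)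
    qed
  qed
  have "mono d"
  proof (rule monoI)
    fix x y :: real assume "x \<le> y"
    show "d x \<le> d y"
    proof (cases "x = y")
      case False
      with \<open>x \<le> y\<close> have "x < y" by simp
      then show ?thesis using dle[OF \<open>x < y\<close>] dge[OF \<open>x < y\<close>] by linarith
    qed simp
  qed
  then show ?thesis using sub that by blast
qed


context
  fixes M N :: "'a measure" and X Z :: "'a \<Rightarrow> real"
  assumes PM: "prob_space M" and PN: "prob_space N"
    and XI: "integrable M X" and ZI: "integrable N Z"
    and mean_eq: "(\<integral>x. X x \<partial>M) = (\<integral>x. Z x \<partial>N)"
    and hinge: "\<And>a. (\<integral>x. max 0 (X x - a) \<partial>M) \<le> (\<integral>x. max 0 (Z x - a) \<partial>N)"
begin

definition good :: "(real \<Rightarrow> real) \<Rightarrow> bool" where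
  "good h \<longleftrightarrow> integrable M (\<lambda>x. h (X x)) \<and> integrable N (\<lambda>x. h (Z x))
     \<and> (\<integral>x. h (X x) \<partial>M) \<le> (\<integral>x. h (Z x) \<partial>N)"

lemma good_affine: "good (\<lambda>y. \<alpha> + \<beta> * y)"
proof -
  interpret M: prob_space M by (rule PM)
  interpret N: prob_space N by (rule PN)
  show ?thesis unfolding good_def using XI ZI mean_eq by (auto simp: M.prob_space N.prob_space)
qed

lemma good_hinge:
  assumes "0 \<le> \<alpha>" shows "good (\<lambda>y. max 0 (\<alpha> * y + \<beta>))"
proof (cases "\<alpha> = 0")
  case True
  then show ?thesis using good_affine[of "max 0 \<beta>" 0] by simp
next
  case False
  with assms have ap: "\<alpha> > 0" by simp
  have eq: "max 0 (\<alpha> * y + \<beta>) = \<alpha> * max 0 (y - (- \<beta> / \<alpha>))" for y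
  proof -
    have "\<alpha> * (y - (- \<beta> / \<alpha>)) = \<alpha> * y + \<beta>" using ap by (simp add: field_simps)
    moreover have "\<alpha> * max 0 t = max 0 (\<alpha> * t)" for t
      using ap by (auto simp: max_def zero_le_mult_iff)
    ultimately show ?thesis by metis
  qed
  interpret M: prob_space M by (rule PM)
  interpret N: prob_space N by (rule PN)
  have iM: "integrable M (\<lambda>x. max 0 (X x - c))" for c
    using XI by (intro integrable_max integrable_diff) auto
  have iN: "integrable N (\<lambda>x. max 0 (Z x - c))" for c
    using ZI by (intro integrable_max integrable_diff) auto
  show ?thesis unfolding good_def eq
    using iM[of "- \<beta> / \<alpha>"] iN[of "- \<beta> / \<alpha>"] hinge[of "- \<beta> / \<alpha>"] ap by (auto intro: mult_left_mono)
qed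

lemma good_add: "good h1 \<Longrightarrow> good h2 \<Longrightarrow> good (\<lambda>y. h1 y + h2 y)"
  unfolding good_def by auto

lemma good_cong: "good h \<Longrightarrow> (\<And>y. h y = h' y) \<Longrightarrow> good h'"
proof -
  assume "good h" "\<And>y. h y = h' y"
  then have "h = h'" by auto
  then show ?thesis using \<open>good h\<close> by simp
qed

lemma good_maxtan:
  fixes f d :: "real \<Rightarrow> real"
  assumes sg: "\<And>x y. f x + d x * (y - x) \<le> f y" and md: "mono d"
    and S: "finite S" "S \<noteq> {}"
  shows "good (\<lambda>x. Max ((\<lambda>y. f y + d y * (x - y)) ` S))"
  using S
proof (induction S rule: finite_linorder_max_induct)
  case empty
  then show ?case by simp
next
  case (insert b A)
  define T where "T y x = f y + d y * (x - y)" for y x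
  show ?case
  proof (cases "A = {}")
    case True
    then show ?thesis using good_affine[of "f b - d b * b" "d b"]
      by (auto elim!: good_cong simp: algebra_simps)
  next
    case False
    define a where "a = Max A"
    have aA: "a \<in> A" using False insert(1) a_def by simp
    have ab: "a < b" using aA insert(2) by auto
    have dab: "d a \<le> d b" using md ab by (simp add: monoD)
    have HA: "good (\<lambda>x. Max ((\<lambda>y. T y x) ` A))"
      using insert(3) False unfolding T_def by simp
    have geTa: "T a x \<le> Max ((\<lambda>y. T y x) ` A)" for x
      using aA insert(1) by (intro Max_ge) auto
    have eq: "Max ((\<lambda>y. T y x) ` insert b A) = Max ((\<lambda>y. T y x) ` A) + max 0 ((d b - d a) * x + (f b - d b * b - f a + d a * a))" for x
    proof (cases "a \<le> x")
      case True
      have "T y x \<le> T a x" if "y \<in> A" for y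
      proof -
        have "y \<le> a" using that insert(1) a_def by simp
        then have "d y \<le> d a" using md by (simp add: monoD)
        then have "(d a - d y) * (x - a) \<ge> 0" using True by simp
        moreover have "f y + d y * (a - y) \<le> f a" by (rule sg)
        ultimately show ?thesis unfolding T_def by (simp add: algebra_simps)
      qed
      then have "Max ((\<lambda>y. T y x) ` A) = T a x"
        using geTa[of x] insert(1) False by (intro antisym Max.boundedI) auto
      moreover have "Max ((\<lambda>y. T y x) ` insert b A) = max (T b x) (Max ((\<lambda>y. T y x) ` A))"
        using insert(1) False by simp
      ultimately show ?thesis unfolding T_def by (simp add: max_def algebra_simps)
    next
      case False
      have "(d b - d a) * (a - x) \<ge> 0" using False dab by simp
      moreover have "f b + d b * (a - b) \<le> f a" by (rule sg)
      ultimately have "T b x \<le> T a x" unfolding T_def by (simp add: algebra_simps)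
      moreover have "Max ((\<lambda>y. T y x) ` insert b A) = max (T b x) (Max ((\<lambda>y. T y x) ` A))"
        using insert(1) \<open>A \<noteq> {}\<close> by simp
      ultimately show ?thesis using geTa[of x] unfolding T_def by (simp add: max_def algebra_simps)
    qed
    have "good (\<lambda>x. Max ((\<lambda>y. T y x) ` A) + max 0 ((d b - d a) * x + (f b - d b * b - f a + d a * a)))"
      using HA good_hinge dab by (intro good_add) auto
    then have "good (\<lambda>x. Max ((\<lambda>y. T y x) ` insert b A))"
      by (rule good_cong) (rule eq[symmetric])
    then show ?thesis unfolding T_def .
  qed
qed

end


definition grid :: "nat \<Rightarrow> real set" where
  "grid n = (\<lambda>i. real_of_int i / real (Suc n)) ` {- (int (Suc n) * int (Suc n)) .. int (Suc n) * int (Suc n)}"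

lemma grid_finite: "finite (grid n)" unfolding grid_def by simp

lemma grid_0: "0 \<in> grid n"
  unfolding grid_def by (rule image_eqI[of _ _ 0]) auto

lemma grid_ne: "grid n \<noteq> {}" using grid_0 by auto

lemma grid_near:
  fixes x :: real
  assumes "\<bar>x\<bar> \<le> real n"
  shows "\<exists>y\<in>grid n. y \<le> x \<and> x - y \<le> 1 / real (Suc n)"
proof -
  define m where "m = real (Suc n)"
  have m0: "m > 0" "m \<ge> 1" unfolding m_def by auto
  define i where "i = \<lfloor>x * m\<rfloor>"
  have i1: "real_of_int i \<le> x * m" "x * m < real_of_int i + 1" unfolding i_def by linarith+
  have xm: "\<bar>x * m\<bar> \<le> real n * m" using assms m0 by (simp add: abs_mult mult_right_mono)
  have nm: "real n * m + 1 \<le> m * m" using m0 unfolding m_def by (simp add: algebra_simps)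
  have "real_of_int i \<le> m * m" using i1 xm nm by linarith
  moreover have "real_of_int i \<ge> - (m * m)" using i1 xm nm by linarith
  ultimately have "real_of_int i \<le> real_of_int (int (Suc n) * int (Suc n))"
     "real_of_int (- (int (Suc n) * int (Suc n))) \<le> real_of_int i"
    unfolding m_def by simp_all
  then have "i \<in> {- (int (Suc n) * int (Suc n)) .. int (Suc n) * int (Suc n)}"
    by (simp only: of_int_le_iff atLeastAtMost_iff)
  then have "real_of_int i / m \<in> grid n" unfolding grid_def m_def by (rule imageI)
  moreover have "real_of_int i / m \<le> x" using i1 m0 by (simp add: divide_le_eq)
  moreover have "x - real_of_int i / m \<le> 1 / m"
  proof -
    have "x * m - real_of_int i \<le> 1" using i1 by linarith
    then have "(x * m - real_of_int i) / m \<le> 1 / m" using m0 by (simp add: divide_right_mono)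
    moreover have "(x * m - real_of_int i) / m = x - real_of_int i / m" using m0 by (simp add: diff_divide_distrib)
    ultimately show ?thesis by simp
  qed
  ultimately show ?thesis unfolding m_def by blast
qed

lemma maxtan_conv:
  fixes f d :: "real \<Rightarrow> real"
  assumes sg: "\<And>x y. f x + d x * (y - x) \<le> f y" and md: "mono d"
  shows "(\<lambda>n. Max ((\<lambda>y. f y + d y * (x - y)) ` grid n)) \<longlonglongrightarrow> f x"
proof -
  define H where "H n = Max ((\<lambda>y. f y + d y * (x - y)) ` grid n)" for n
  define K where "K = d x - d (x - 1)"
  have up: "H n \<le> f x" for n
    unfolding H_def using grid_finite grid_ne sg by (intro Max.boundedI) (auto simp: algebra_simps)
  have lo: "f x - K * inverse (real (Suc n)) \<le> H n" if xn: "\<bar>x\<bar> \<le> real n" for n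
  proof -
    obtain y where y: "y \<in> grid n" "y \<le> x" "x - y \<le> 1 / real (Suc n)"
      using grid_near[OF xn] by blast
    have "1 / real (Suc n) \<le> 1" by simp
    then have "d (x - 1) \<le> d y" using y md by (intro monoD[OF md]) linarith
    moreover have "d y \<le> d x" using y md by (simp add: monoD)
    ultimately have "(d x - d y) * (x - y) \<le> K * (1 / real (Suc n))"
      unfolding K_def using y by (intro mult_mono) auto
    moreover have "f x - (f y + d y * (x - y)) \<le> (d x - d y) * (x - y)"
      using sg[of x y] by (simp add: algebra_simps)
    moreover have "f y + d y * (x - y) \<le> H n"
      unfolding H_def using y grid_finite by (intro Max_ge) auto
    ultimately show ?thesis by (simp add: inverse_eq_divide)
  qed
  have ev: "eventually (\<lambda>n. f x - K * inverse (real (Suc n)) \<le> H n) sequentially"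
    unfolding eventually_sequentially
  proof (intro exI allI impI)
    fix n assume "nat \<lceil>\<bar>x\<bar>\<rceil> \<le> n"
    then have "\<bar>x\<bar> \<le> real n" by linarith
    then show "f x - K * inverse (real (Suc n)) \<le> H n" by (rule lo)
  qed
  have "(\<lambda>n. f x - K * inverse (real (Suc n))) \<longlonglongrightarrow> f x - K * 0"
    by (intro tendsto_intros LIMSEQ_inverse_real_of_nat)
  then have "(H \<longlongrightarrow> f x) sequentially"
    by (intro tendsto_sandwich[OF ev _ _ tendsto_const]) (auto simp: up)
  then show ?thesis unfolding H_def .
qed



lemma dom_lim:
  fixes K :: "'a measure" and W :: "'a \<Rightarrow> real" and H :: "nat \<Rightarrow> real \<Rightarrow> real"
  assumes PK: "prob_space K" and fI: "integrable K (\<lambda>x. f (W x))" and WI: "integrable K W"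
    and HI: "\<And>n. integrable K (\<lambda>x. H n (W x))"
    and lo: "\<And>n y. a + b * y \<le> H n y" and up: "\<And>n y. H n y \<le> f y"
    and lim: "\<And>y. (\<lambda>n. H n y) \<longlonglongrightarrow> f y"
  shows "(\<lambda>n. \<integral>x. H n (W x) \<partial>K) \<longlonglongrightarrow> (\<integral>x. f (W x) \<partial>K)"
proof -
  interpret K: prob_space K by (rule PK)
  show ?thesis
  proof (rule integral_dominated_convergence[where w="\<lambda>x. \<bar>a + b * W x\<bar> + \<bar>f (W x)\<bar>"])
    show "(\<lambda>x. f (W x)) \<in> borel_measurable K" using fI by auto
    show "(\<lambda>x. H n (W x)) \<in> borel_measurable K" for n using HI[of n] by auto
    show "integrable K (\<lambda>x. \<bar>a + b * W x\<bar> + \<bar>f (W x)\<bar>)"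
    proof -
      have "integrable K (\<lambda>x. a + b * W x)"
        using WI by simp
      then show ?thesis using fI by (rule Bochner_Integration.integrable_add[OF integrable_abs integrable_abs])
    qed
    show "AE x in K. (\<lambda>n. H n (W x)) \<longlonglongrightarrow> f (W x)" using lim by auto
    show "AE x in K. norm (H n (W x)) \<le> \<bar>a + b * W x\<bar> + \<bar>f (W x)\<bar>" for n
    proof (rule AE_I2)
      fix x
      have "a + b * W x \<le> H n (W x)" "H n (W x) \<le> f (W x)" using lo up by auto
      then show "norm (H n (W x)) \<le> \<bar>a + b * W x\<bar> + \<bar>f (W x)\<bar>" by auto
    qed
  qed
qed

lemma cx_core:
  fixes M N :: "'a measure" and X Z :: "'a \<Rightarrow> real" and f :: "real \<Rightarrow> real"
  assumes PM: "prob_space M" and PN: "prob_space N"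
    and XI: "integrable M X" and ZI: "integrable N Z"
    and mean_eq: "(\<integral>x. X x \<partial>M) = (\<integral>x. Z x \<partial>N)"
    and hinge: "\<And>a. (\<integral>x. max 0 (X x - a) \<partial>M) \<le> (\<integral>x. max 0 (Z x - a) \<partial>N)"
    and cf: "convex_on UNIV f" and fX: "integrable M (\<lambda>x. f (X x))" and fZ: "integrable N (\<lambda>x. f (Z x))"
  shows "(\<integral>x. f (X x) \<partial>M) \<le> (\<integral>x. f (Z x) \<partial>N)"
proof -
  obtain d where sg: "\<And>x y. f x + d x * (y - x) \<le> f y" and md: "mono d"
    using convex_subgrad[OF cf] by blast
  define H where "H n y = Max ((\<lambda>t. f t + d t * (y - t)) ` grid n)" for n y
  have G: "good M N X Z (H n)" for n
    unfolding H_def by (rule good_maxtan[OF PM PN XI ZI mean_eq hinge sg md grid_finite grid_ne])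
  have lo: "(f 0 - d 0 * 0) + d 0 * y \<le> H n y" for n y
    unfolding H_def using grid_finite grid_0 by (intro Max_ge) (auto intro!: image_eqI[of _ _ 0])
  have up: "H n y \<le> f y" for n y
    unfolding H_def using grid_finite grid_ne sg by (intro Max.boundedI) (auto simp: algebra_simps)
  have lim: "(\<lambda>n. H n y) \<longlonglongrightarrow> f y" for y
    unfolding H_def by (rule maxtan_conv[OF sg md])
  have LM: "(\<lambda>n. \<integral>x. H n (X x) \<partial>M) \<longlonglongrightarrow> (\<integral>x. f (X x) \<partial>M)"
    using G[unfolded good_def[OF PM PN XI ZI mean_eq hinge]] by (intro dom_lim[OF PM fX XI _ lo up lim]) auto
  have LN: "(\<lambda>n. \<integral>x. H n (Z x) \<partial>N) \<longlonglongrightarrow> (\<integral>x. f (Z x) \<partial>N)"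
    using G[unfolded good_def[OF PM PN XI ZI mean_eq hinge]] by (intro dom_lim[OF PN fZ ZI _ lo up lim]) auto
  show ?thesis
    by (rule LIMSEQ_le[OF LM LN]) (use G[unfolded good_def[OF PM PN XI ZI mean_eq hinge]] in auto)
qed




lemma hinge_int:
  fixes K :: "'a measure" and W :: "'a \<Rightarrow> real"
  assumes "prob_space K" "integrable K W"
  shows "integrable K (\<lambda>x. max 0 (W x - a))"
proof -
  interpret K: prob_space K by fact
  show ?thesis using assms(2) by (intro Bochner_Integration.integrable_max Bochner_Integration.integrable_diff) auto
qed

lemma hinge_lip:
  fixes K :: "'a measure" and W :: "'a \<Rightarrow> real"
  assumes PK: "prob_space K" and WI: "integrable K W"
  shows "\<bar>(\<integral>x. max 0 (W x - a) \<partial>K) - (\<integral>x. max 0 (W x - b) \<partial>K)\<bar> \<le> \<bar>a - b\<bar>"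
proof -
  interpret K: prob_space K by fact
  have "\<bar>(\<integral>x. max 0 (W x - a) \<partial>K) - (\<integral>x. max 0 (W x - b) \<partial>K)\<bar>
      = \<bar>\<integral>x. max 0 (W x - a) - max 0 (W x - b) \<partial>K\<bar>"
    using hinge_int[OF PK WI] by (subst Bochner_Integration.integral_diff) auto
  also have "\<dots> \<le> (\<integral>x. \<bar>max 0 (W x - a) - max 0 (W x - b)\<bar> \<partial>K)"
    by (rule Bochner_Integration.integral_abs_bound)
  also have "\<dots> \<le> (\<integral>x. \<bar>a - b\<bar> \<partial>K)"
    using hinge_int[OF PK WI]
    by (intro Bochner_Integration.integral_mono) (auto simp: max_def)
  also have "\<dots> = \<bar>a - b\<bar>" by (simp add: K.prob_space)
  finally show ?thesis .
qed

lemma hinge_anti: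
  fixes K :: "'a measure" and W :: "'a \<Rightarrow> real"
  assumes PK: "prob_space K" and WI: "integrable K W" and "a \<le> b"
  shows "(\<integral>x. max 0 (W x - b) \<partial>K) \<le> (\<integral>x. max 0 (W x - a) \<partial>K)"
  using hinge_int[OF PK WI] assms(3) by (intro Bochner_Integration.integral_mono) auto

lemma hinge_lower:
  fixes K :: "'a measure" and W :: "'a \<Rightarrow> real"
  assumes PK: "prob_space K" and WI: "integrable K W"
  shows "(\<integral>x. W x \<partial>K) - a \<le> (\<integral>x. max 0 (W x - a) \<partial>K)"
proof -
  interpret K: prob_space K by fact
  have "(\<integral>x. W x - a \<partial>K) \<le> (\<integral>x. max 0 (W x - a) \<partial>K)"
    using hinge_int[OF PK WI] WI by (intro Bochner_Integration.integral_mono) auto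
  then show ?thesis using WI by (simp add: Bochner_Integration.integral_diff K.prob_space)
qed

lemma hinge_lim:
  fixes K :: "'a measure" and W :: "'a \<Rightarrow> real"
  assumes PK: "prob_space K" and WI: "integrable K W"
  shows "(\<lambda>n. \<integral>x. max 0 (W x - real n) \<partial>K) \<longlonglongrightarrow> (\<integral>x. 0 \<partial>K)"
proof (rule integral_dominated_convergence[where w="\<lambda>x. \<bar>W x\<bar>"])
  show "(\<lambda>x. 0::real) \<in> borel_measurable K" by simp
  show "(\<lambda>x. max 0 (W x - real n)) \<in> borel_measurable K" for n
    using hinge_int[OF PK WI] by auto
  show "integrable K (\<lambda>x. \<bar>W x\<bar>)" using WI by auto
  show "AE x in K. (\<lambda>n. max 0 (W x - real n)) \<longlonglongrightarrow> 0"
  proof (rule AE_I2)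
    fix x
    have "eventually (\<lambda>n. max 0 (W x - real n) = 0) sequentially"
      unfolding eventually_sequentially
    proof (intro exI[of _ "nat \<lceil>W x\<rceil>"] allI impI)
      fix n assume "nat \<lceil>W x\<rceil> \<le> n"
      then have "W x \<le> real n" by linarith
      then show "max 0 (W x - real n) = 0" by simp
    qed
    then show "(\<lambda>n. max 0 (W x - real n)) \<longlonglongrightarrow> 0"
      by (rule tendsto_eventually)
  qed
  show "AE x in K. norm (max 0 (W x - real n)) \<le> \<bar>W x\<bar>" for n
    by (rule AE_I2) auto
qed

lemma hinge_ivt:
  fixes K :: "'a measure" and W :: "'a \<Rightarrow> real"
  assumes PK: "prob_space K" and WI: "integrable K W" and y: "y > 0"
  shows "\<exists>u. (\<integral>x. max 0 (W x - u) \<partial>K) = y"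
proof -
  define F where "F a = (\<integral>x. max 0 (W x - a) \<partial>K)" for a
  have "(\<lambda>n. F (real n)) \<longlonglongrightarrow> 0" using hinge_lim[OF PK WI] unfolding F_def by simp
  then have "eventually (\<lambda>n. F (real n) < y) sequentially" using y by (rule order_tendstoD)
  then obtain n where n: "F (real n) < y" by (auto simp: eventually_sequentially)
  define a0 where "a0 = (\<integral>x. W x \<partial>K) - y"
  have Fa0: "y \<le> F a0" using hinge_lower[OF PK WI, of a0] unfolding F_def a0_def by simp
  define b where "b = max a0 (real n)"
  have Fb: "F b \<le> y" using hinge_anti[OF PK WI, of "real n" b] n unfolding F_def b_def by simp
  have cont: "isCont F x" for x
    unfolding continuous_at_eps_delta
  proof (intro allI impI)
    fix \<epsilon> :: real assume "\<epsilon> > 0"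
    then show "\<exists>d>0. \<forall>x'. dist x' x < d \<longrightarrow> dist (F x') (F x) < \<epsilon>"
      using hinge_lip[OF PK WI] unfolding F_def dist_real_def
      by (intro exI[of _ \<epsilon>]) (auto intro: le_less_trans)
  qed
  have "\<exists>u. a0 \<le> u \<and> u \<le> b \<and> F u = y"
    using IVT2[of F b y a0] Fb Fa0 by (auto simp: b_def cont)
  then show ?thesis unfolding F_def by blast
qed

lemma co_reduce:
  fixes p q :: "real measure" and g \<phi> :: "real \<Rightarrow> real"
  assumes rp: "real_distr p" and rq: "real_distr q" and gm: "g \<in> borel_measurable borel"
    and phim: "\<phi> \<in> borel_measurable borel"
    and gpi: "integrable p (\<lambda>x. g (\<phi> x))" and gqi: "integrable q g"
    and meq: "(\<integral>x. g (\<phi> x) \<partial>p) = (\<integral>x. g x \<partial>q)"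
    and hg: "\<And>a. (\<integral>x. max 0 (g (\<phi> x) - a) \<partial>p) \<le> (\<integral>x. max 0 (g x - a) \<partial>q)"
  shows "convex_order_wrt g (distr p borel \<phi>) q"
  unfolding convex_order_wrt_def
proof (intro allI impI)
  fix f :: "real \<Rightarrow> real"
  assume cf: "convex_on UNIV f" and i1: "integrable (distr p borel \<phi>) (\<lambda>x. f (g x))"
    and i2: "integrable q (\<lambda>x. f (g x))"
  have P: "prob_space p" and S: "sets p = sets borel" using rp unfolding real_distr_def by auto
  have Q: "prob_space q" using rq unfolding real_distr_def by auto
  have phip: "\<phi> \<in> borel_measurable p" using phim by (simp only: measurable_cong_sets[OF S refl])
  have fc: "continuous_on UNIV f" using convex_on_continuous[OF open_UNIV cf] .
  have fm: "f \<in> borel_measurable borel" using fc by (rule borel_measurable_continuous_onI)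
  have fgm: "(\<lambda>x. f (g x)) \<in> borel_measurable borel" using fm gm by measurable
  have i1': "integrable p (\<lambda>x. f (g (\<phi> x)))"
    using i1 integrable_distr_eq[OF phip fgm] by simp
  have "(\<integral>x. f (g x) \<partial>distr p borel \<phi>) = (\<integral>x. f (g (\<phi> x)) \<partial>p)"
    by (rule integral_distr[OF phip fgm])
  also have "\<dots> \<le> (\<integral>x. f (g x) \<partial>q)"
    by (rule cx_core[OF P Q gpi gqi meq hg cf i1' i2])
  finally show "(\<integral>x. f (g x) \<partial>distr p borel \<phi>) \<le> (\<integral>x. f (g x) \<partial>q)" .
qed



lemma core:
  fixes p q :: "real measure" and g :: "real \<Rightarrow> real" and \<Lambda> :: "real \<Rightarrow> real \<Rightarrow> real"
    and V :: "real set" and e :: real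
  assumes rp: "real_distr p" and rq: "real_distr q" and gm: "g \<in> borel_measurable borel"
    and gpi: "integrable p g" and gqi: "integrable q g"
    and Lm: "\<And>h. h \<in> borel_measurable borel \<Longrightarrow> (\<lambda>x. \<Lambda> x (h x)) \<in> borel_measurable borel"
    and gV: "\<And>x. g x \<in> V" and Vup: "\<And>c c'. c \<in> V \<Longrightarrow> c \<le> c' \<Longrightarrow> c' \<in> V"
    and mqV: "(\<integral>x. g x \<partial>q) \<in> V"
    and LV: "\<And>x c. c \<in> V \<Longrightarrow> g (\<Lambda> x c) = c \<and> \<bar>x - \<Lambda> x c\<bar> = \<bar>g x - c\<bar>"
    and e0: "0 \<le> e"
    and Cb: "\<And>a. \<bar>(\<integral>x. max 0 (g x - a) \<partial>p) - (\<integral>x. max 0 (g x - a) \<partial>q)\<bar> \<le> e"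
    and mb: "\<bar>(\<integral>x. g x \<partial>p) - (\<integral>x. g x \<partial>q)\<bar> \<le> e"
  shows "\<exists>r. r \<in> friendly p (3 * e) g \<and> convex_order_wrt g r q"
proof -
  have P: "prob_space p" and S: "sets p = sets borel" using rp unfolding real_distr_def by auto
  have Q: "prob_space q" using rq unfolding real_distr_def by auto
  interpret P: prob_space p by (rule P)
  interpret Q: prob_space q by (rule Q)
  define mp where "mp = (\<integral>x. g x \<partial>p)"
  define mq where "mq = (\<integral>x. g x \<partial>q)"
  define C where "C a = (\<integral>x. max 0 (g x - a) \<partial>p)" for a
  define Cq where "Cq a = (\<integral>x. max 0 (g x - a) \<partial>q)" for a
  define Pp where "Pp a = (\<integral>x. max 0 (a - g x) \<partial>p)" for a
  have iC: "integrable p (\<lambda>x. max 0 (g x - a))" for a by (rule hinge_int[OF P gpi])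
  have iCq: "integrable q (\<lambda>x. max 0 (g x - a))" for a by (rule hinge_int[OF Q gqi])
  have iP: "integrable p (\<lambda>x. max 0 (a - g x))" for a
    using gpi by (intro Bochner_Integration.integrable_max Bochner_Integration.integrable_diff) auto
  have PC: "Pp a = C a - mp + a" for a
  proof -
    have "Pp a = (\<integral>x. (max 0 (g x - a) - g x) + a \<partial>p)"
      unfolding Pp_def by (rule Bochner_Integration.integral_cong) (auto simp: max_def)
    also have "\<dots> = C a - mp + a"
      unfolding C_def mp_def using iC[of a] gpi
      by (simp add: Bochner_Integration.integral_diff Bochner_Integration.integral_add P.prob_space)
    finally show ?thesis .
  qed
  have Cb': "\<bar>C a - Cq a\<bar> \<le> e" for a unfolding C_def Cq_def by (rule Cb)
  have mb': "\<bar>mp - mq\<bar> \<le> e" unfolding mp_def mq_def by (rule mb)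
  have Cq_ge: "mq - a \<le> Cq a" for a unfolding mq_def Cq_def by (rule hinge_lower[OF Q gqi])
  have Cq_nn: "0 \<le> Cq a" for a unfolding Cq_def by (rule integral_nonneg_AE) auto
  have ggm: "(\<lambda>x. g x) \<in> borel_measurable borel" using gm by simp
  show ?thesis
  proof (cases "e = 0")
    case True
    define r where "r = distr p borel (\<lambda>x. x)"
    have "r \<in> friendly p (3 * e) g"
      unfolding r_def using True gpi
      by (intro friendly_map[OF rp gm]) auto
    moreover have "convex_order_wrt g r q"
      unfolding r_def
    proof (rule co_reduce[OF rp rq gm _ _ gqi])
      show "(\<integral>x. g x \<partial>p) = (\<integral>x. g x \<partial>q)" using mb True by simp
      show "(\<integral>x. max 0 (g x - a) \<partial>p) \<le> (\<integral>x. max 0 (g x - a) \<partial>q)" for a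
        using Cb[of a] True by simp
    qed (use gpi in auto)
    ultimately show ?thesis by blast
  next
    case False
    with e0 have ep: "e > 0" by simp
    define s where "s = max 0 (mp - mq)"
    define t where "t = max 0 (mq - mp)"
    have st: "t - s = mq - mp" "s + t \<le> e" "0 \<le> s" "0 \<le> t"
      using mb' unfolding s_def t_def by auto
    obtain u where Cu: "C u = e + s"
      using hinge_ivt[OF P gpi, of "e + s"] ep st unfolding C_def by auto
    obtain l' where l': "(\<integral>x. max 0 ((- g x) - l') \<partial>p) = e + t"
      using hinge_ivt[OF P _, of "\<lambda>x. - g x" "e + t"] ep st gpi by auto
    define l where "l = - l'"
    have Pl: "Pp l = e + t"
    proof -
      have "Pp l = (\<integral>x. max 0 ((- g x) - l') \<partial>p)"
        unfolding Pp_def l_def by (rule Bochner_Integration.integral_cong) (auto simp: algebra_simps)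
      then show ?thesis using l' by simp
    qed
    show ?thesis
    proof (cases "l \<le> u")
      case lu: True
      define c where "c x = max l (min u (g x))" for x
      define \<phi> where "\<phi> x = \<Lambda> x (c x)" for x
      have lV: "l \<in> V"
      proof (rule ccontr)
        assume "l \<notin> V"
        then have "\<And>x. l \<le> g x" using gV Vup by (meson linear)
        then have "Pp l = 0" unfolding Pp_def by simp
        then show False using Pl ep st by simp
      qed
      have cV: "c x \<in> V" for x using Vup[OF lV] unfolding c_def by simp
      have gphi: "g (\<phi> x) = c x" and cost1: "\<bar>x - \<phi> x\<bar> = \<bar>g x - c x\<bar>" for x
        using LV[OF cV[of x], of x] unfolding \<phi>_def by auto
      have cm: "c \<in> borel_measurable borel" unfolding c_def using gm by measurable
      have phim: "\<phi> \<in> borel_measurable borel" unfolding \<phi>_def by (rule Lm[OF cm])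
      have c_eq: "c x = g x + max 0 (l - g x) - max 0 (g x - u)" for x
        unfolding c_def using lu by (auto simp: max_def min_def)
      have ci: "integrable p c"
        unfolding c_eq using gpi iP iC by auto
      have mean: "(\<integral>x. c x \<partial>p) = mq"
      proof -
        have "(\<integral>x. c x \<partial>p) = mp + Pp l - C u"
          unfolding c_eq mp_def Pp_def C_def using gpi iP iC
          by (simp add: Bochner_Integration.integral_diff Bochner_Integration.integral_add)
        then show ?thesis using Cu Pl st by simp
      qed
      have abs_eq: "\<bar>g x - c x\<bar> = max 0 (l - g x) + max 0 (g x - u)" for x
        unfolding c_def using lu by (auto simp: max_def min_def)
      have costI: "(\<integral>x. \<bar>g x - c x\<bar> \<partial>p) = Pp l + C u"
        unfolding abs_eq Pp_def C_def using iP iC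
        by (simp add: Bochner_Integration.integral_add)
      have cost: "(\<integral>\<^sup>+x. ennreal \<bar>x - \<phi> x\<bar> \<partial>p) \<le> ennreal (3 * e)"
      proof -
        have "(\<integral>\<^sup>+x. ennreal \<bar>x - \<phi> x\<bar> \<partial>p) = (\<integral>\<^sup>+x. ennreal \<bar>g x - c x\<bar> \<partial>p)"
          by (simp add: cost1)
        also have "\<dots> = ennreal (\<integral>x. \<bar>g x - c x\<bar> \<partial>p)"
          using gpi ci by (intro nn_integral_eq_integral) auto
        also have "\<dots> \<le> ennreal (3 * e)"
          using costI Pl Cu st by (intro ennreal_leI) simp
        finally show ?thesis .
      qed
      have lmq: "l \<le> mq"
      proof -
        have "(\<integral>x. l \<partial>p) \<le> (\<integral>x. c x \<partial>p)"
          by (rule Bochner_Integration.integral_mono[OF _ ci]) (auto simp: c_def)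
        then show ?thesis using mean by (simp add: P.prob_space)
      qed
      have mqu: "mq \<le> u"
      proof -
        have "(\<integral>x. c x \<partial>p) \<le> (\<integral>x. u \<partial>p)"
          by (rule Bochner_Integration.integral_mono[OF ci]) (use lu in \<open>auto simp: c_def\<close>)
        then show ?thesis using mean by (simp add: P.prob_space)
      qed
      define r where "r = distr p borel \<phi>"
      have "r \<in> friendly p (3 * e) g"
        unfolding r_def
      proof (rule friendly_map[OF rp gm phim])
        show "integrable p (\<lambda>x. g (\<phi> x))" using ci by (simp add: gphi)
        show "(\<integral>\<^sup>+x. ennreal \<bar>x - \<phi> x\<bar> \<partial>p) \<le> ennreal (3 * e)" by (rule cost)
        show "min (g x) (\<integral>x. g (\<phi> x) \<partial>p) \<le> g (\<phi> x) \<and> g (\<phi> x) \<le> max (g x) (\<integral>x. g (\<phi> x) \<partial>p)" for x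
          unfolding gphi mean using lmq mqu unfolding c_def by (auto simp: max_def min_def)
      qed
      moreover have "convex_order_wrt g r q"
        unfolding r_def
      proof (rule co_reduce[OF rp rq gm phim _ gqi])
        show "integrable p (\<lambda>x. g (\<phi> x))" using ci by (simp add: gphi)
        show "(\<integral>x. g (\<phi> x) \<partial>p) = (\<integral>x. g x \<partial>q)" using mean by (simp add: gphi mq_def)
        fix a
        show "(\<integral>x. max 0 (g (\<phi> x) - a) \<partial>p) \<le> (\<integral>x. max 0 (g x - a) \<partial>q)"
        proof -
          have "(\<integral>x. max 0 (g (\<phi> x) - a) \<partial>p) \<le> Cq a"
          proof (cases "u \<le> a")
            case True
            have "(\<integral>x. max 0 (g (\<phi> x) - a) \<partial>p) = (\<integral>x. 0 \<partial>p)"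
              using True lu by (intro Bochner_Integration.integral_cong) (auto simp: gphi c_def max_def min_def)
            then show ?thesis using Cq_nn[of a] by simp
          next
            case False
            show ?thesis
            proof (cases "l \<le> a")
              case True
              have "(\<integral>x. max 0 (g (\<phi> x) - a) \<partial>p) = (\<integral>x. max 0 (g x - a) - max 0 (g x - u) \<partial>p)"
                using True False by (intro Bochner_Integration.integral_cong) (auto simp: gphi c_def max_def min_def)
              also have "\<dots> = C a - C u"
                unfolding C_def using iC by (simp add: Bochner_Integration.integral_diff)
              finally show ?thesis using Cu Cb'[of a] st by (simp add: abs_le_iff)
            next
              case False
              have "(\<integral>x. max 0 (g (\<phi> x) - a) \<partial>p) = (\<integral>x. c x - a \<partial>p)"
                using False by (intro Bochner_Integration.integral_cong) (auto simp: gphi c_def max_def min_def)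
              also have "\<dots> = mq - a"
                using ci mean by (simp add: Bochner_Integration.integral_diff P.prob_space)
              finally show ?thesis using Cq_ge[of a] by simp
            qed
          qed
          then show ?thesis unfolding Cq_def .
        qed
      qed
      ultimately show ?thesis by blast
    next
      case ul: False
      define \<phi> where "\<phi> x = \<Lambda> x mq" for x
      have gphi: "g (\<phi> x) = mq" and cost1: "\<bar>x - \<phi> x\<bar> = \<bar>g x - mq\<bar>" for x
        using LV[OF mqV[folded mq_def], of x] unfolding \<phi>_def by auto
      have phim: "\<phi> \<in> borel_measurable borel" unfolding \<phi>_def using Lm[of "\<lambda>x. mq"] by simp
      have abs_eq: "\<bar>g x - mq\<bar> = max 0 (g x - mq) + max 0 (mq - g x)" for x
        by (auto simp: max_def)
      have costI: "(\<integral>x. \<bar>g x - mq\<bar> \<partial>p) = C mq + Pp mq"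
        unfolding abs_eq Pp_def C_def using iP iC
        by (simp add: Bochner_Integration.integral_add)
      have bound: "C mq + Pp mq \<le> 3 * e"
      proof (cases "u \<le> mq")
        case True
        have "C mq \<le> C u" unfolding C_def by (rule hinge_anti[OF P gpi True])
        then show ?thesis using PC[of mq] Cu st by simp
      next
        case False
        have "Pp mq \<le> Pp l"
          unfolding Pp_def using iP False ul by (intro Bochner_Integration.integral_mono) auto
        then show ?thesis using PC[of mq] PC[of l] Pl st by simp
      qed
      have cost: "(\<integral>\<^sup>+x. ennreal \<bar>x - \<phi> x\<bar> \<partial>p) \<le> ennreal (3 * e)"
      proof -
        have "(\<integral>\<^sup>+x. ennreal \<bar>x - \<phi> x\<bar> \<partial>p) = (\<integral>\<^sup>+x. ennreal \<bar>g x - mq\<bar> \<partial>p)"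
          by (simp add: cost1)
        also have "\<dots> = ennreal (\<integral>x. \<bar>g x - mq\<bar> \<partial>p)"
          using gpi by (intro nn_integral_eq_integral) auto
        also have "\<dots> \<le> ennreal (3 * e)"
          using costI bound by (intro ennreal_leI) simp
        finally show ?thesis .
      qed
      define r where "r = distr p borel \<phi>"
      have "r \<in> friendly p (3 * e) g"
        unfolding r_def
      proof (rule friendly_map[OF rp gm phim])
        show "integrable p (\<lambda>x. g (\<phi> x))" by (simp add: gphi)
        show "(\<integral>\<^sup>+x. ennreal \<bar>x - \<phi> x\<bar> \<partial>p) \<le> ennreal (3 * e)" by (rule cost)
        show "min (g x) (\<integral>x. g (\<phi> x) \<partial>p) \<le> g (\<phi> x) \<and> g (\<phi> x) \<le> max (g x) (\<integral>x. g (\<phi> x) \<partial>p)" for x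
          by (simp add: gphi P.prob_space)
      qed
      moreover have "convex_order_wrt g r q"
        unfolding r_def
      proof (rule co_reduce[OF rp rq gm phim _ gqi])
        show "integrable p (\<lambda>x. g (\<phi> x))" by (simp add: gphi)
        show "(\<integral>x. g (\<phi> x) \<partial>p) = (\<integral>x. g x \<partial>q)" by (simp add: gphi mq_def P.prob_space)
        fix a
        show "(\<integral>x. max 0 (g (\<phi> x) - a) \<partial>p) \<le> (\<integral>x. max 0 (g x - a) \<partial>q)"
          using Cq_ge[of a] Cq_nn[of a] unfolding Cq_def by (simp add: gphi P.prob_space)
      qed
      ultimately show ?thesis by blast
    qed
  qed
qed



lemma U1: "(\<lambda>x. max 0 (x - a)) \<in> Uprime"
proof -
  have "(\<lambda>x. max 0 (x - a)) = (\<lambda>x. max 0 (1 * x - a))" by simp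
  moreover have "(\<lambda>x. max 0 (1 * x - a)) \<in> {(\<lambda>x. max 0 (v * x - a)) | v a. \<bar>v\<bar> \<le> (1::real)}"
    by (rule CollectI, rule exI[of _ 1], rule exI[of _ a]) simp
  ultimately show ?thesis unfolding Uprime_def by simp
qed

lemma U2: "(\<lambda>x. max 0 (- x - a)) \<in> Uprime"
proof -
  have "(\<lambda>x. max 0 (- x - a)) = (\<lambda>x. max 0 ((-1) * x - a))" by simp
  moreover have "\<bar>-1::real\<bar> \<le> 1" by simp
  moreover have "(\<lambda>x. max 0 ((-1) * x - a)) \<in> {(\<lambda>x. max 0 (v * x - a)) | v a. \<bar>v\<bar> \<le> (1::real)}"
    by (rule CollectI, rule exI[of _ "-1"], rule exI[of _ a]) simp
  ultimately show ?thesis unfolding Uprime_def by simp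
qed

lemma U3: "(\<lambda>x. x) \<in> Uprime"
proof -
  have "(\<lambda>x::real. x) \<in> {(\<lambda>x. v * x) | v. \<bar>v\<bar> \<le> (1::real)}"
    by (rule CollectI, rule exI[of _ 1]) simp
  then show ?thesis unfolding Uprime_def by blast
qed

lemma Wbound:
  assumes "W1tilde p q \<le> ereal \<epsilon>" "u \<in> Uprime"
  shows "\<bar>(\<integral>x. u x \<partial>p) - (\<integral>x. u x \<partial>q)\<bar> \<le> \<epsilon>"
proof -
  have "ereal \<bar>(\<integral>x. u x \<partial>p) - (\<integral>x. u x \<partial>q)\<bar> \<le> W1tilde p q"
    unfolding W1tilde_def using assms(2) by (rule SUP_upper)
  from order_trans[OF this assms(1)] show ?thesis by simp
qed

lemma friendly_mono: "\<eta> \<le> \<eta>' \<Longrightarrow> r \<in> friendly p \<eta> g \<Longrightarrow> r \<in> friendly p \<eta>' g"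
  unfolding friendly_def using ennreal_leI order_trans by blast

lemma friendly_self:
  assumes "real_distr q" "g \<in> borel_measurable borel" "integrable q g" "0 \<le> \<eta>"
  shows "q \<in> friendly q \<eta> g"
proof -
  have S: "sets q = sets borel" using assms(1) unfolding real_distr_def by auto
  have "distr q borel (\<lambda>x. x) \<in> friendly q \<eta> g"
    using assms by (intro friendly_map) auto
  moreover have "distr q borel (\<lambda>x. x) = q" using distr_id2[of borel q] S by simp
  ultimately show ?thesis by simp
qed

theorem lemma4p7:
  fixes p q :: "real measure" and \<epsilon> :: real and g :: "real \<Rightarrow> real"
  assumes "real_distr p" and "real_distr q"
    and "integrable p (\<lambda>x. x)" and "integrable q (\<lambda>x. x)"
    and "W1tilde p q \<le> ereal \<epsilon>"
    and "g = (\<lambda>x. x) \<or> g = abs"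
  shows "\<exists>rp rq. rp \<in> friendly p (7 * \<epsilon>) g \<and> rq \<in> friendly q (7 * \<epsilon>) g
                 \<and> convex_order_wrt g rp rq"
  proof -
  note rp = assms(1) and rq = assms(2)
  have P: "prob_space p" using rp unfolding real_distr_def by auto
  have Q: "prob_space q" using rq unfolding real_distr_def by auto
  interpret P: prob_space p by (rule P)
  interpret Q: prob_space q by (rule Q)
  have W: "\<bar>(\<integral>x. u x \<partial>p) - (\<integral>x. u x \<partial>q)\<bar> \<le> \<epsilon>" if "u \<in> Uprime" for u
    by (rule Wbound[OF assms(5) that])
  have e0: "0 \<le> \<epsilon>" using W[OF U3] by linarith
  have ip: "integrable p (\<lambda>x. x)" and iq: "integrable q (\<lambda>x. x)" using assms(3,4) .
  have "\<exists>r. r \<in> friendly p (3 * (2 * \<epsilon>)) g \<and> convex_order_wrt g r q"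
    using assms(6)
  proof
    assume gid: "g = (\<lambda>x. x)"
    have "\<exists>r. r \<in> friendly p (3 * (2 * \<epsilon>)) (\<lambda>x. x) \<and> convex_order_wrt (\<lambda>x. x) r q"
    proof (rule core[OF rp rq _ ip iq, where \<Lambda>="\<lambda>x c. c" and V=UNIV])
      show "\<bar>(\<integral>x. max 0 (x - a) \<partial>p) - (\<integral>x. max 0 (x - a) \<partial>q)\<bar> \<le> 2 * \<epsilon>" for a
        using W[OF U1[of a]] e0 by simp
      show "\<bar>(\<integral>x. x \<partial>p) - (\<integral>x. x \<partial>q)\<bar> \<le> 2 * \<epsilon>"
        using W[OF U3] e0 by simp
    qed (use e0 in auto)
    then show ?thesis using gid by simp
  next
    assume gabs: "g = abs"
    have ipa: "integrable p (\<lambda>x. \<bar>x\<bar>)" using ip by auto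
    have iqa: "integrable q (\<lambda>x. \<bar>x\<bar>)" using iq by auto
    have ipn: "integrable p (\<lambda>x. - x)" using ip by auto
    have iqn: "integrable q (\<lambda>x. - x)" using iq by auto
    have split: "(\<integral>x. max 0 (\<bar>x\<bar> - a) \<partial>M) = (\<integral>x. max 0 (x - max a 0) \<partial>M) + (\<integral>x. max 0 (- x - max a 0) \<partial>M) + (max a 0 - a)"
      if "prob_space M" "integrable M (\<lambda>x. x)" for M :: "real measure" and a
    proof -
      interpret M: prob_space M by fact
      have i1: "integrable M (\<lambda>x. max 0 (x - max a 0))" by (rule hinge_int[OF that])
      have i2: "integrable M (\<lambda>x. max 0 (- x - max a 0))"
        using hinge_int[OF that(1), of "\<lambda>x. - x"] that(2) by auto
      have "(\<integral>x. max 0 (\<bar>x\<bar> - a) \<partial>M) = (\<integral>x. (max 0 (x - max a 0) + max 0 (- x - max a 0)) + (max a 0 - a) \<partial>M)"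
        by (rule Bochner_Integration.integral_cong) (auto simp: max_def)
      also have "\<dots> = (\<integral>x. max 0 (x - max a 0) \<partial>M) + (\<integral>x. max 0 (- x - max a 0) \<partial>M) + (max a 0 - a)"
        using i1 i2 by (simp add: Bochner_Integration.integral_add M.prob_space)
      finally show ?thesis .
    qed
    have "\<exists>r. r \<in> friendly p (3 * (2 * \<epsilon>)) abs \<and> convex_order_wrt abs r q"
    proof (rule core[OF rp rq _ ipa iqa, where \<Lambda>="\<lambda>x c. if x < 0 then - c else c" and V="{0..}"])
      show "\<bar>(\<integral>x. max 0 (\<bar>x\<bar> - a) \<partial>p) - (\<integral>x. max 0 (\<bar>x\<bar> - a) \<partial>q)\<bar> \<le> 2 * \<epsilon>" for a
        using split[OF P ip, of a] split[OF Q iq, of a] W[OF U1[of "max a 0"]] W[OF U2[of "max a 0"]]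
        by linarith
      show "\<bar>(\<integral>x. \<bar>x\<bar> \<partial>p) - (\<integral>x. \<bar>x\<bar> \<partial>q)\<bar> \<le> 2 * \<epsilon>"
        using split[OF P ip, of 0] split[OF Q iq, of 0] W[OF U1[of 0]] W[OF U2[of 0]]
        by simp
      show "(\<integral>x. \<bar>x\<bar> \<partial>q) \<in> {0..}" by simp
      show "(\<lambda>x. if x < 0 then - h x else h x) \<in> borel_measurable borel"
        if hm: "h \<in> borel_measurable borel" for h :: "real \<Rightarrow> real"
      proof (rule measurable_If)
        show "(\<lambda>x. - h x) \<in> borel_measurable borel" using hm by (rule borel_measurable_uminus)
        show "h \<in> borel_measurable borel" by (rule hm)
        show "{x \<in> space borel. x < (0::real)} \<in> sets borel" by measurable
      qed
    qed (use e0 in auto)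
    then show ?thesis using gabs by simp
  qed
  then obtain r where r: "r \<in> friendly p (3 * (2 * \<epsilon>)) g" "convex_order_wrt g r q" by blast
  have gm: "g \<in> borel_measurable borel" using assms(6) by auto
  have gqi: "integrable q g" using assms(6) iq by auto
  have "r \<in> friendly p (7 * \<epsilon>) g" using friendly_mono[OF _ r(1)] e0 by simp
  moreover have "q \<in> friendly q (7 * \<epsilon>) g" using friendly_self[OF rq gm gqi] e0 by simp
  ultimately show ?thesis using r(2) by blast
qed


end
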